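(* Let $\beta\in(0,1/2^{|S|})$, $\varepsilon\in\left(0,\frac{\beta(1-\beta)}{L|S|^4}\right)$, let $q$ be an irreducible transition matrix on $S$ and $\widehat q$ a transition matrix that is $(\varepsilon,\beta)$-close to $q$. Let $C$ be a nonempty proper subset of $S$ and $s\in C$. Then for every $g\in G^\beta(C)$ one has $\mu_sq(g(s)\mid s)\ge\varepsilon\zeta_q$, and for every $g\in\widehat G^\beta(C)$ one has $\mu_s\widehat q(g(s)\mid s)\ge\varepsilon\zeta_q$.
   Context: $S$ is a finite set with $|S|\ge2$. Transition matrices have nonnegative entries with rows summing to 1; $q(D\mid s)=\sum_{t\in D}q(t\mid s)$, $\overline C=S\setminus C$. $\mu$ is the stationary distribution of the irreducible $q$. $\zeta_q=\min_{\emptyset\neq C\subsetneq S}\sum_{s\in C}\mu_sq(\overline C\mid s)$. $\widehat q$ is $(\varepsilon,\beta)$-close to $q$ if for all $s,t\in S$, $\left|1-\frac{\widehat q(t\mid s)}{q(t\mid s)}\right|\le\beta$ whenever $\mu_sq(t\mid s)\ge\varepsilon\zeta_q$ or $\mu_s\widehat q(t\mid s)\ge\varepsilon\zeta_q$ (the latter case requiring $q(t\mid s)>0$). $L=\sum_{n=1}^{|S|-1}\binom{|S|}{n}n^{|S|}$. A $C$-graph is a directed graph on $S$ without cycles in which each $s\in C$ has exactly one outgoing edge $(s,g(s))$ and states outside $C$ have none; $G(C)$ is the set of $C$-graphs. Weights: $p(g)=\prod_{s\in C}q(g(s)\mid s)$, $\widehat p(g)=\prod_{s\in C}\widehat q(g(s)\mid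 s)$. $G^\beta(C)=\{g\in G(C):p(g)\ge\beta\max_{g'\in G(C)}p(g')\}$ and $\widehat G^\beta(C)=\{g\in G(C):\widehat p(g)\ge\beta\max_{g'\in G(C)}\widehat p(g')\}$. *)

theory Defs
  imports Complex_Main
begin

text \<open>The finite state space S is the universe of a finite type 'a.
  A transition matrix q is a function with q s t = q(t | s).\<close>

definition transition_matrix :: "('a::finite \<Rightarrow> 'a \<Rightarrow> real) \<Rightarrow> bool" where
  "transition_matrix q \<longleftrightarrow> (\<forall>s t. 0 \<le> q s t) \<and> (\<forall>s. (\<Sum>t\<in>UNIV. q s t) = 1)"

definition irreducible :: "('a::finite \<Rightarrow> 'a \<Rightarrow> real) \<Rightarrow> bool" where
  "irreducible q \<longleftrightarrow> (\<forall>s t. (s, t) \<in> {(x, y). q x y > 0}\<^sup>+)"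

definition stationary :: "('a::finite \<Rightarrow> 'a \<Rightarrow> real) \<Rightarrow> ('a \<Rightarrow> real) \<Rightarrow> bool" where
  "stationary q \<mu> \<longleftrightarrow> (\<forall>s. 0 \<le> \<mu> s) \<and> (\<Sum>s\<in>UNIV. \<mu> s) = 1
     \<and> (\<forall>t. (\<Sum>s\<in>UNIV. \<mu> s * q s t) = \<mu> t)"

definition qset :: "('a::finite \<Rightarrow> 'a \<Rightarrow> real) \<Rightarrow> 'a set \<Rightarrow> 'a \<Rightarrow> real" where
  "qset q D s = (\<Sum>t\<in>D. q s t)"

definition zeta :: "('a::finite \<Rightarrow> 'a \<Rightarrow> real) \<Rightarrow> ('a \<Rightarrow> real) \<Rightarrow> real" where
  "zeta q \<mu> = Min ((\<lambda>C. \<Sum>s\<in>C. \<mu> s * qset q (- C) s) ` {C. C \<noteq> {} \<and> C \<noteq> UNIV})"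

definition close :: "real \<Rightarrow> real \<Rightarrow> ('a::finite \<Rightarrow> 'a \<Rightarrow> real) \<Rightarrow> ('a \<Rightarrow> real)
    \<Rightarrow> ('a \<Rightarrow> 'a \<Rightarrow> real) \<Rightarrow> bool" where
  "close \<epsilon> \<beta> q \<mu> qh \<longleftrightarrow> (\<forall>s t.
     (\<mu> s * q s t \<ge> \<epsilon> * zeta q \<mu> \<longrightarrow> \<bar>1 - qh s t / q s t\<bar> \<le> \<beta>) \<and>
     (\<mu> s * qh s t \<ge> \<epsilon> * zeta q \<mu> \<longrightarrow> q s t > 0 \<and> \<bar>1 - qh s t / q s t\<bar> \<le> \<beta>))"

definition L_const :: "nat \<Rightarrow> nat" where
  "L_const N = (\<Sum>n=1..N-1. (N choose n) * n ^ N)"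

text \<open>A C-graph: each s in C has the single edge (s, g s); states outside C have
  no outgoing edge (canonically g s = s there); the edge set is acyclic
  (in particular no self-loops).\<close>

definition Cgraphs :: "'a::finite set \<Rightarrow> ('a \<Rightarrow> 'a) set" where
  "Cgraphs C = {g. (\<forall>s. s \<notin> C \<longrightarrow> g s = s) \<and> acyclic {(s, g s) | s. s \<in> C}}"

definition gweight :: "('a::finite \<Rightarrow> 'a \<Rightarrow> real) \<Rightarrow> 'a set \<Rightarrow> ('a \<Rightarrow> 'a) \<Rightarrow> real" where
  "gweight q C g = (\<Prod>s\<in>C. q s (g s))"

definition Gbeta :: "real \<Rightarrow> ('a::finite \<Rightarrow> 'a \<Rightarrow> real) \<Rightarrow> 'a set \<Rightarrow> ('a \<Rightarrow> 'a) set" where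
  "Gbeta \<beta> q C = {g \<in> Cgraphs C. gweight q C g \<ge> \<beta> * Max (gweight q C ` Cgraphs C)}"

end

theory Submission
  imports Defs "HOL-Library.FuncSet"
begin

definition rel :: "('a \<Rightarrow> 'a) \<Rightarrow> 'a set \<Rightarrow> ('a \<times> 'a) set" where
  "rel g D = {(x, g x) | x. x \<in> D}"

lemma Cgraphs_iff: "g \<in> Cgraphs D \<longleftrightarrow> (\<forall>x. x \<notin> D \<longrightarrow> g x = x) \<and> acyclic (rel g D)"
  by (simp add: Cgraphs_def rel_def)

lemma rel_mem[simp]: "(a, b) \<in> rel g D \<longleftrightarrow> a \<in> D \<and> b = g a"
  by (auto simp: rel_def)

lemma finite_rel[simp]: "finite (rel (g::'a::finite \<Rightarrow> 'a) D)"
  by (rule finite_subset[of _ UNIV]) auto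

lemma acyclic_Un_dom:
  fixes R1 R2 :: "('a::finite \<times> 'a) set"
  assumes "acyclic R1" "acyclic R2" "Domain R2 \<inter> Range R1 = {}"
  shows "acyclic (R1 \<union> R2)"
proof -
  have "finite R1" "finite R2" by (simp_all add: finite_subset[of _ UNIV])
  then have "wf R1" "wf R2" using assms(1,2) finite_acyclic_wf by blast+
  then have "wf (R2 \<union> R1)" using wf_Un assms(3) by blast
  then show ?thesis by (simp add: wf_acyclic Un_commute)
qed

lemma Cgraphs_no_fix: "g \<in> Cgraphs D \<Longrightarrow> x \<in> D \<Longrightarrow> g x \<noteq> x"
  unfolding Cgraphs_iff acyclic_def
  by (metis r_into_trancl' rel_mem)

lemma finite_Cgraphs[simp]: "finite (Cgraphs (D::'a::finite set))"
  by simp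

lemma Cgraphs_reach:
  fixes g :: "'a::finite \<Rightarrow> 'a"
  assumes "g \<in> Cgraphs D"
  shows "\<exists>y. y \<notin> D \<and> (x, y) \<in> (rel g D)\<^sup>*"
proof -
  have "wf ((rel g D)\<inverse>)" using assms finite_acyclic_wf_converse[OF finite_rel] Cgraphs_iff by blast
  then show ?thesis
  proof (induction x rule: wf_induct_rule)
    case (less x)
    show ?case
    proof (cases "x \<in> D")
      case True
      then have "(g x, x) \<in> (rel g D)\<inverse>" by simp
      then obtain y where "y \<notin> D" "(g x, y) \<in> (rel g D)\<^sup>*" using less by blast
      moreover have "(x, g x) \<in> rel g D" using True by simp
      ultimately show ?thesis by (meson converse_rtrancl_into_rtrancl)
    qed auto
  qed
qed

lemma reach_root:
  fixes g :: "'a::finite \<Rightarrow> 'a"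
  assumes "acyclic (rel g (-{r}))"
  shows "(x, r) \<in> (rel g (-{r}))\<^sup>*"
proof -
  have "wf ((rel g (-{r}))\<inverse>)" using assms finite_acyclic_wf_converse[OF finite_rel] by blast
  then show ?thesis
  proof (induction x rule: wf_induct_rule)
    case (less x)
    show ?case
    proof (cases "x = r")
      case False
      then have "(g x, x) \<in> (rel g (-{r}))\<inverse>" by simp
      then have "(g x, r) \<in> (rel g (-{r}))\<^sup>*" using less by blast
      moreover have "(x, g x) \<in> rel g (-{r})" using False by simp
      ultimately show ?thesis by (meson converse_rtrancl_into_rtrancl)
    qed auto
  qed
qed

lemma card_Cgraphs:
  fixes D :: "'a::finite set"
  assumes "card (UNIV::'a set) \<ge> 2"
  shows "card (Cgraphs D) \<le> (card (UNIV::'a set) - 1) ^ card (UNIV::'a set)"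
proof -
  let ?P = "\<Pi>\<^sub>E x\<in>D. (-{x})"
  have "inj_on (\<lambda>g. restrict g D) (Cgraphs D)"
  proof (rule inj_onI)
    fix g h assume "g \<in> Cgraphs D" "h \<in> Cgraphs D" "restrict g D = restrict h D"
    then show "g = h" unfolding Cgraphs_iff by (metis ext restrict_apply')
  qed
  moreover have "(\<lambda>g. restrict g D) ` Cgraphs D \<subseteq> ?P"
    using Cgraphs_no_fix by fastforce
  ultimately have "card (Cgraphs D) \<le> card ?P"
    by (meson card_inj_on_le finite_PiE finite)
  also have "card ?P = (\<Prod>x\<in>D. card (-{x}))" by (simp add: card_PiE)
  also have "\<dots> = (card (UNIV::'a set) - 1) ^ card D"
    by (simp add: Compl_eq_Diff_UNIV card_Diff_singleton)
  also have "\<dots> \<le> (card (UNIV::'a set) - 1) ^ card (UNIV::'a set)"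
  proof (cases "card (UNIV::'a set) - 1 = 0")
    case True
    then show ?thesis using assms by simp
  next
    case False
    then show ?thesis by (intro power_increasing) (auto simp: card_mono)
  qed
  finally show ?thesis .
qed

lemma pos_graph:
  fixes q :: "'a::finite \<Rightarrow> 'a \<Rightarrow> real"
  assumes irr: "irreducible q" and T: "T \<noteq> {}"
  shows "\<exists>g\<in>Cgraphs (-T). \<forall>x\<in>-T. q x (g x) > 0"
proof -
  define E where "E = {(x, y). q x y > 0}"
  obtain y0 where y0: "y0 \<in> T" using T by blast
  have ex: "\<exists>n. \<exists>y\<in>T. (x, y) \<in> E ^^ n" for x
  proof -
    have "(x, y0) \<in> E\<^sup>+" using irr unfolding irreducible_def E_def by blast
    then have "(x, y0) \<in> E\<^sup>*" by simp
    then show ?thesis using y0 rtrancl_power by blast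
  qed
  define d where "d x = (LEAST n. \<exists>y\<in>T. (x, y) \<in> E ^^ n)" for x
  have step: "\<exists>z. q x z > 0 \<and> d z < d x" if "x \<notin> T" for x
  proof -
    obtain y where y: "y \<in> T" "(x, y) \<in> E ^^ d x"
      using LeastI_ex[OF ex[of x]] unfolding d_def by blast
    have "d x \<noteq> 0"
    proof
      assume "d x = 0"
      then have "x = y" using y(2) by simp
      then show False using y(1) that by simp
    qed
    then obtain k where k: "d x = Suc k" using not0_implies_Suc by blast
    then obtain z where z: "(x, z) \<in> E" "(z, y) \<in> E ^^ k" using y relpow_Suc_D2 by metis
    have "d z \<le> k" unfolding d_def using z(2) y(1) by (intro Least_le) blast
    then show ?thesis using z(1) k unfolding E_def by auto
  qed
  define g where "g x = (if x \<in> T then x else SOME z. q x z > 0 \<and> d z < d x)" for x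
  have g: "q x (g x) > 0 \<and> d (g x) < d x" if "x \<notin> T" for x
    using someI_ex[OF step[OF that]] that unfolding g_def by simp
  have "rel g (-T) \<subseteq> (inv_image less_than d)\<inverse>" using g by auto
  moreover have "acyclic ((inv_image less_than d)\<inverse>)"
    unfolding acyclic_converse by (rule wf_acyclic) simp
  ultimately have "acyclic (rel g (-T))" using acyclic_subset by blast
  then have "g \<in> Cgraphs (-T)" unfolding Cgraphs_iff g_def by auto
  then show ?thesis using g by auto
qed

lemma gweight_nonneg: "transition_matrix q \<Longrightarrow> gweight q D g \<ge> 0"
  unfolding gweight_def transition_matrix_def by (simp add: prod_nonneg)

lemma pos_Max:
  fixes q :: "'a::finite \<Rightarrow> 'a \<Rightarrow> real"
  assumes irr: "irreducible q" and D: "D \<noteq> UNIV"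
  shows "Cgraphs D \<noteq> {}" "Max (gweight q D ` Cgraphs D) > 0"
    "\<exists>a\<in>Cgraphs D. gweight q D a = Max (gweight q D ` Cgraphs D)"
    "\<And>a. a \<in> Cgraphs D \<Longrightarrow> gweight q D a \<le> Max (gweight q D ` Cgraphs D)"
proof -
  have "-D \<noteq> {}" using D by auto
  from pos_graph[OF irr this] obtain g where g: "g \<in> Cgraphs D" "\<forall>x\<in>D. q x (g x) > 0" by auto
  then show "Cgraphs D \<noteq> {}" by auto
  have "gweight q D g > 0" unfolding gweight_def using g by (simp add: prod_pos)
  then show "Max (gweight q D ` Cgraphs D) > 0"
    using g(1) by (meson Max_ge finite_Cgraphs finite_imageI image_eqI less_le_trans)
  show "\<exists>a\<in>Cgraphs D. gweight q D a = Max (gweight q D ` Cgraphs D)"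
    using g(1) by (metis (no_types, lifting) Max_in empty_iff finite_Cgraphs finite_imageI image_iff image_is_empty)
  show "\<And>a. a \<in> Cgraphs D \<Longrightarrow> gweight q D a \<le> Max (gweight q D ` Cgraphs D)"
    by simp
qed

definition W :: "('a::finite \<Rightarrow> 'a \<Rightarrow> real) \<Rightarrow> 'a \<Rightarrow> real" where
  "W q r = (\<Sum>h\<in>Cgraphs (-{r}). gweight q (-{r}) h)"

definition Pw :: "('a::finite \<Rightarrow> 'a \<Rightarrow> real) \<Rightarrow> ('a \<Rightarrow> 'a) \<Rightarrow> real" where
  "Pw q f = (\<Prod>x\<in>UNIV. q x (f x))"

definition Fs :: "'a::finite \<Rightarrow> ('a \<Rightarrow> 'a) set" where
  "Fs r = {f. acyclic (rel f (-{r}))}"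

lemma rel_upd_out: "r \<notin> D \<Longrightarrow> rel (f(r:=v)) D = rel f D"
  by (auto simp: rel_def)

lemma Pw_upd:
  fixes h :: "'a::finite \<Rightarrow> 'a"
  shows "Pw q (h(r:=v)) = gweight q (-{r}) h * q r v"
proof -
  have "Pw q (h(r:=v)) = q r v * (\<Prod>x\<in>-{r}. q x ((h(r:=v)) x))"
    unfolding Pw_def by (subst prod.remove[of UNIV r]) (auto simp: Compl_eq_Diff_UNIV)
  also have "(\<Prod>x\<in>-{r}. q x ((h(r:=v)) x)) = gweight q (-{r}) h"
    unfolding gweight_def by (rule prod.cong) auto
  finally show ?thesis by (simp only: mult.commute)
qed

lemma bij1:
  fixes r :: "'a::finite"
  shows "bij_betw (\<lambda>(h, v). h(r := v)) (Cgraphs (-{r}) \<times> UNIV) (Fs r)"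
proof (rule bij_betwI[where g = "\<lambda>f. (f(r:=r), f r)"])
  show "(\<lambda>(h, v). h(r := v)) \<in> Cgraphs (-{r}) \<times> UNIV \<rightarrow> Fs r"
    by (auto simp: Fs_def Cgraphs_iff rel_upd_out)
  show "(\<lambda>f. (f(r := r), f r)) \<in> Fs r \<rightarrow> Cgraphs (-{r}) \<times> UNIV"
    by (auto simp: Fs_def Cgraphs_iff rel_upd_out)
  show "(\<lambda>f. (f(r := r), f r)) ((\<lambda>(h, v). h(r := v)) x) = x" if "x \<in> Cgraphs (-{r}) \<times> UNIV" for x
  proof -
    obtain h v where x: "x = (h, v)" by fastforce
    have "h r = r" using that x by (simp add: Cgraphs_iff)
    then have "(h(r:=v))(r:=r) = h" by auto
    then show ?thesis using x by simp
  qed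
  show "(\<lambda>(h, v). h(r := v)) ((\<lambda>f. (f(r := r), f r)) y) = y" for y
    by simp
qed

lemma bij2:
  fixes s :: "'a::finite"
  shows "bij_betw (\<lambda>h. h(s := t)) (Cgraphs (-{s})) {f\<in>Fs s. f s = t}"
proof (rule bij_betwI[where g = "\<lambda>f. f(s:=s)"])
  show "(\<lambda>h. h(s := t)) \<in> Cgraphs (-{s}) \<rightarrow> {f\<in>Fs s. f s = t}"
    by (auto simp: Fs_def Cgraphs_iff rel_upd_out)
  show "(\<lambda>f. f(s:=s)) \<in> {f\<in>Fs s. f s = t} \<rightarrow> Cgraphs (-{s})"
    by (auto simp: Fs_def Cgraphs_iff rel_upd_out)
  show "(\<lambda>f. f(s:=s)) ((\<lambda>h. h(s := t)) x) = x" if "x \<in> Cgraphs (-{s})" for x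
  proof -
    have "x s = s" using that by (simp add: Cgraphs_iff)
    then show ?thesis by auto
  qed
  show "(\<lambda>h. h(s := t)) ((\<lambda>f. f(s:=s)) y) = y" if "y \<in> {f\<in>Fs s. f s = t}" for y
    using that by auto
qed

lemma W_Fs:
  fixes q :: "'a::finite \<Rightarrow> 'a \<Rightarrow> real"
  assumes tm: "transition_matrix q"
  shows "W q r = (\<Sum>f\<in>Fs r. Pw q f)"
proof -
  let ?T = "Cgraphs (-{r})"
  have "W q r = (\<Sum>h\<in>?T. gweight q (-{r}) h * (\<Sum>v\<in>UNIV. q r v))"
    using tm unfolding W_def transition_matrix_def by simp
  also have "\<dots> = (\<Sum>h\<in>?T. \<Sum>v\<in>UNIV. Pw q (h(r:=v)))"
    by (simp only: Pw_upd sum_distrib_left)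
  also have "\<dots> = (\<Sum>(h,v)\<in>?T \<times> UNIV. Pw q (h(r:=v)))"
    by (rule sum.cartesian_product)
  also have "\<dots> = (\<Sum>x\<in>?T \<times> UNIV. Pw q ((\<lambda>(h, v). h(r := v)) x))"
    by (rule sum.cong) auto
  also have "\<dots> = (\<Sum>f\<in>Fs r. Pw q f)"
    by (rule sum.reindex_bij_betw[OF bij1])
  finally show ?thesis .
qed

lemma W_Fs_t:
  fixes q :: "'a::finite \<Rightarrow> 'a \<Rightarrow> real"
  shows "W q s * q s t = (\<Sum>f\<in>{f\<in>Fs s. f s = t}. Pw q f)"
proof -
  have "W q s * q s t = (\<Sum>h\<in>Cgraphs (-{s}). Pw q (h(s:=t)))"
    unfolding W_def by (simp only: Pw_upd sum_distrib_right)
  also have "\<dots> = (\<Sum>f\<in>{f\<in>Fs s. f s = t}. Pw q f)"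
    by (rule sum.reindex_bij_betw[OF bij2])
  finally show ?thesis .
qed

lemma rel_single_valued: "single_valued (rel f D)"
  by (auto simp: single_valued_def)

lemma rtrancl_avoid:
  assumes "(x, y) \<in> R\<^sup>*"
  shows "(x, y) \<in> (R \<inter> {(a, b). a \<noteq> z})\<^sup>* \<or> (x, z) \<in> R\<^sup>*"
  using assms
proof (induction rule: rtrancl_induct)
  case base then show ?case by simp
next
  case (step y w)
  show ?case
  proof (cases "(x, z) \<in> R\<^sup>*")
    case False
    then have 1: "(x, y) \<in> (R \<inter> {(a, b). a \<noteq> z})\<^sup>*" using step by blast
    have "(x, y) \<in> R\<^sup>*" using 1 rtrancl_mono[of "R \<inter> {(a, b). a \<noteq> z}" R] by blast
    then have "y \<noteq> z" using False by blast
    then have "(y, w) \<in> R \<inter> {(a, b). a \<noteq> z}" using step by auto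
    then show ?thesis using 1 by (meson rtrancl.rtrancl_into_rtrancl)
  qed simp
qed

lemma rel_restrict: "rel f D \<inter> {(a, b). a \<noteq> z} = rel f (D - {z})"
  by (auto simp: rel_def)

lemma no_out_rtrancl: "(t, y) \<in> (rel f D)\<^sup>* \<Longrightarrow> t \<notin> D \<Longrightarrow> y = t"
  by (erule converse_rtranclE) auto

lemma Fs_i:
  fixes f :: "'a::finite \<Rightarrow> 'a"
  assumes "f \<in> Fs s" "f s = t"
  shows "f \<in> Fs t"
proof (cases "s = t")
  case False
  have eq: "rel f (-{t}) = insert (s, t) (rel f (-{s,t}))" using assms False by (auto simp: rel_def)
  have "acyclic (rel f (-{s}))" using assms(1) by (simp add: Fs_def)
  then have "acyclic (rel f (-{s,t}))"
    by (rule acyclic_subset) (auto simp: rel_def)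
  moreover have "(t, s) \<notin> (rel f (-{s,t}))\<^sup>*"
  proof
    assume "(t, s) \<in> (rel f (-{s,t}))\<^sup>*"
    then have "s = t" by (rule no_out_rtrancl) simp
    then show False using False by simp
  qed
  ultimately have "acyclic (rel f (-{t}))" unfolding eq by simp
  then show ?thesis by (simp add: Fs_def)
qed (use assms in simp)

lemma Fs_ii:
  fixes f :: "'a::finite \<Rightarrow> 'a"
  assumes ft: "f \<in> Fs t"
  shows "\<exists>s. f \<in> Fs s \<and> f s = t"
proof (cases "f t = t")
  case True then show ?thesis using ft by blast
next
  case False
  let ?R = "rel f (-{t})"
  have "(f t, t) \<in> ?R\<^sup>*" using ft reach_root unfolding Fs_def by blast
  then have "(f t, t) \<in> ?R\<^sup>+" using False by (meson rtranclD)
  then obtain s where s: "(f t, s) \<in> ?R\<^sup>*" "(s, t) \<in> ?R" by (meson tranclD2)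
  have st: "s \<noteq> t" "f s = t" using s(2) by auto
  let ?R' = "rel f (-{s,t})"
  have eq: "rel f (-{s}) = insert (t, f t) ?R'" using st by (auto simp: rel_def)
  have "acyclic ?R" using ft by (simp add: Fs_def)
  then have "acyclic ?R'" by (rule acyclic_subset) (auto simp: rel_def)
  moreover have "(f t, t) \<notin> ?R'\<^sup>*"
  proof
    assume "(f t, t) \<in> ?R'\<^sup>*"
    then have "(f t, t) \<in> ?R'\<^sup>+" using False by (meson rtranclD)
    then obtain s' where s': "(f t, s') \<in> ?R'\<^sup>*" "(s', t) \<in> ?R'" by (meson tranclD2)
    have s'2: "s' \<noteq> s" "s' \<noteq> t" "f s' = t" using s'(2) by auto
    have "?R' \<subseteq> ?R" by (auto simp: rel_def)
    then have "(f t, s') \<in> ?R\<^sup>*" using s'(1) rtrancl_mono by blast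
    then have "(s, s') \<in> ?R\<^sup>* \<or> (s', s) \<in> ?R\<^sup>*"
      using single_valued_confluent[OF rel_single_valued s(1)] by blast
    then show False
    proof
      assume a: "(s, s') \<in> ?R\<^sup>*"
      have "(s, s') \<in> ?R\<^sup>+" using rtranclD[OF a] s'2(1) by auto
      then obtain z where "(s, z) \<in> ?R" "(z, s') \<in> ?R\<^sup>*" using tranclD by metis
      then have "(t, s') \<in> ?R\<^sup>*" using st by auto
      then have "s' = t" by (rule no_out_rtrancl) simp
      then show False using s'2 by simp
    next
      assume a: "(s', s) \<in> ?R\<^sup>*"
      have "(s', s) \<in> ?R\<^sup>+" using rtranclD[OF a] s'2(1) by auto
      then obtain z where "(s', z) \<in> ?R" "(z, s) \<in> ?R\<^sup>*" using tranclD by metis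
      then have "(t, s) \<in> ?R\<^sup>*" using s'2 by auto
      then have "s = t" by (rule no_out_rtrancl) simp
      then show False using st by simp
    qed
  qed
  ultimately have "acyclic (rel f (-{s}))" unfolding eq by simp
  then have "f \<in> Fs s" by (simp add: Fs_def)
  then show ?thesis using st by blast
qed

lemma Fs_iii:
  fixes f :: "'a::finite \<Rightarrow> 'a"
  assumes "f \<in> Fs s" "f \<in> Fs s'" "f s = f s'"
  shows "s = s'"
proof (rule ccontr)
  assume ne: "s \<noteq> s'"
  define t where "t = f s"
  have ac: "acyclic (rel f (-{s}))" "acyclic (rel f (-{s'}))" using assms unfolding Fs_def by auto
  show False
  proof (cases "t = s \<or> t = s'")
    case True
    then show False
    proof
      assume "t = s"
      then have "(s, s) \<in> rel f (-{s'})" using ne t_def by auto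
      then show False using ac(2) unfolding acyclic_def by blast
    next
      assume "t = s'"
      then have "(s', s') \<in> rel f (-{s})" using ne t_def assms(3) by auto
      then show False using ac(1) unfolding acyclic_def by blast
    qed
  next
    case False
    have "(t, s) \<in> (rel f (-{s}))\<^sup>*" using reach_root ac(1) by blast
    then have "(t, s) \<in> (rel f (-{s}) \<inter> {(a, b). a \<noteq> s'})\<^sup>* \<or> (t, s') \<in> (rel f (-{s}))\<^sup>*"
      by (rule rtrancl_avoid)
    then show False
    proof
      assume "(t, s) \<in> (rel f (-{s}) \<inter> {(a, b). a \<noteq> s'})\<^sup>*"
      moreover have "rel f (-{s}) \<inter> {(a, b). a \<noteq> s'} \<subseteq> rel f (-{s'})" by (auto simp: rel_def)
      ultimately have "(t, s) \<in> (rel f (-{s'}))\<^sup>*" using rtrancl_mono by blast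
      moreover have "(s, t) \<in> rel f (-{s'})" using ne t_def by auto
      ultimately have "(s, s) \<in> (rel f (-{s'}))\<^sup>+" by (meson rtrancl_into_trancl2)
      then show False using ac(2) unfolding acyclic_def by blast
    next
      assume "(t, s') \<in> (rel f (-{s}))\<^sup>*"
      moreover have "(s', t) \<in> rel f (-{s})" using ne t_def assms(3) by auto
      ultimately have "(s', s') \<in> (rel f (-{s}))\<^sup>+" by (meson rtrancl_into_trancl2)
      then show False using ac(1) unfolding acyclic_def by blast
    qed
  qed
qed

lemma W_stationary:
  fixes q :: "'a::finite \<Rightarrow> 'a \<Rightarrow> real"
  assumes tm: "transition_matrix q"
  shows "(\<Sum>s\<in>UNIV. W q s * q s t) = W q t"
proof -
  have "(\<Sum>s\<in>UNIV. W q s * q s t) = (\<Sum>s\<in>UNIV. \<Sum>f\<in>UNIV. if f \<in> Fs s \<and> f s = t then Pw q f else 0)"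
    by (simp add: W_Fs_t sum.If_cases Int_def)
  also have "\<dots> = (\<Sum>f\<in>UNIV. \<Sum>s\<in>UNIV. if f \<in> Fs s \<and> f s = t then Pw q f else 0)"
    by (rule sum.swap)
  also have "\<dots> = (\<Sum>f\<in>UNIV. if f \<in> Fs t then Pw q f else 0)"
  proof (rule sum.cong)
    fix f :: "'a \<Rightarrow> 'a"
    show "(\<Sum>s\<in>UNIV. if f \<in> Fs s \<and> f s = t then Pw q f else 0) = (if f \<in> Fs t then Pw q f else 0)"
    proof (cases "f \<in> Fs t")
      case True
      then obtain s0 where s0: "f \<in> Fs s0" "f s0 = t" using Fs_ii by blast
      have "(\<Sum>s\<in>UNIV. if f \<in> Fs s \<and> f s = t then Pw q f else 0) = (\<Sum>s\<in>UNIV. if s = s0 then Pw q f else 0)"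
      proof (rule sum.cong)
        fix s
        have "(f \<in> Fs s \<and> f s = t) \<longleftrightarrow> s = s0"
        proof
          assume "f \<in> Fs s \<and> f s = t"
          then show "s = s0" using s0 by (intro Fs_iii[of f s s0]) auto
        qed (use s0 in simp)
        then show "(if f \<in> Fs s \<and> f s = t then Pw q f else 0) = (if s = s0 then Pw q f else 0)"
          by simp
      qed simp
      then show ?thesis using True by simp
    next
      case False
      have "\<forall>s\<in>UNIV. (if f \<in> Fs s \<and> f s = t then Pw q f else 0) = 0"
      proof
        fix s
        show "(if f \<in> Fs s \<and> f s = t then Pw q f else 0) = 0"
          using False Fs_i[of f s t] by auto
      qed
      then show ?thesis using False by (simp only: sum.neutral) simp
    qed
  qed simp
  also have "\<dots> = W q t" using W_Fs[OF tm] by (simp add: sum.If_cases Int_def)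
  finally show ?thesis .
qed

lemma closed_pred:
  assumes "(y, x) \<in> E\<^sup>+" "P x" "\<And>a b. (a, b) \<in> E \<Longrightarrow> P b \<Longrightarrow> P a"
  shows "P y"
  using assms(1)
proof (induction rule: converse_trancl_induct)
  case (base y) then show ?case using assms by blast
next
  case (step y z) then show ?case using assms by blast
qed

lemma tm_nonneg: "transition_matrix q \<Longrightarrow> q x y \<ge> 0"
  by (simp add: transition_matrix_def)

lemma st_eq: "stationary q \<mu> \<Longrightarrow> (\<Sum>s\<in>UNIV. \<mu> s * q s t) = \<mu> t"
  by (simp add: stationary_def)

lemma mu_pos:
  fixes q :: "'a::finite \<Rightarrow> 'a \<Rightarrow> real"
  assumes tm: "transition_matrix q" and irr: "irreducible q" and st: "stationary q \<mu>"
  shows "\<mu> x > 0"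
proof (rule ccontr)
  assume "\<not> \<mu> x > 0"
  moreover have "\<mu> x \<ge> 0" using st by (simp add: stationary_def)
  ultimately have x0: "\<mu> x = 0" by linarith
  let ?E = "{(x, y). q x y > 0}"
  have cl: "\<mu> a = 0" if "(a, b) \<in> ?E" "\<mu> b = 0" for a b
  proof -
    have "\<mu> a * q a b \<le> (\<Sum>s\<in>UNIV. \<mu> s * q s b)"
      by (rule member_le_sum) (use st tm in \<open>auto simp: stationary_def transition_matrix_def\<close>)
    then have "\<mu> a * q a b \<le> 0" using st_eq[OF st] that by simp
    moreover have "\<mu> a \<ge> 0" using st by (simp add: stationary_def)
    ultimately show ?thesis using that(1) by (simp add: mult_le_0_iff) 
  qed
  have "\<mu> y = 0" for y
  proof -
    have "(y, x) \<in> ?E\<^sup>+" using irr unfolding irreducible_def by blast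
    then show ?thesis using closed_pred[of y x ?E "\<lambda>z. \<mu> z = 0"] x0 cl by blast
  qed
  then show False using st unfolding stationary_def by simp
qed

lemma stationary_unique:
  fixes q :: "'a::finite \<Rightarrow> 'a \<Rightarrow> real"
  assumes tm: "transition_matrix q" and irr: "irreducible q" and st: "stationary q \<mu>"
    and w: "\<And>x. (\<Sum>y\<in>UNIV. w y * q y x) = w x"
  shows "w x = (\<Sum>y\<in>UNIV. w y) * \<mu> x"
proof -
  have mp: "\<mu> y > 0" for y using mu_pos[OF tm irr st] .
  define m where "m = Max (range (\<lambda>y. w y / \<mu> y))"
  have le: "w y \<le> m * \<mu> y" for y
  proof -
    have "w y / \<mu> y \<le> m" unfolding m_def by simp
    then show ?thesis using mp[of y] by (simp add: divide_le_eq)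
  qed
  have "m \<in> range (\<lambda>y. w y / \<mu> y)" unfolding m_def by (rule Max_in) auto
  then obtain x0 where "w x0 / \<mu> x0 = m" by auto
  then have x0: "w x0 = m * \<mu> x0" using mp[of x0] by (simp add: divide_eq_eq)
  let ?E = "{(x, y). q x y > 0}"
  have cl: "w a = m * \<mu> a" if "(a, b) \<in> ?E" "w b = m * \<mu> b" for a b
  proof -
    have "(\<Sum>y\<in>UNIV. (m * \<mu> y - w y) * q y b) = m * (\<Sum>y\<in>UNIV. \<mu> y * q y b) - (\<Sum>y\<in>UNIV. w y * q y b)"
      by (simp add: algebra_simps sum_subtractf sum_distrib_left)
    also have "\<dots> = 0" using st_eq[OF st] w that(2) by simp
    finally have "(\<Sum>y\<in>UNIV. (m * \<mu> y - w y) * q y b) = 0" .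
    moreover have "\<forall>y\<in>UNIV. (m * \<mu> y - w y) * q y b \<ge> 0"
      using le tm_nonneg[OF tm] by simp
    ultimately have "\<forall>y\<in>UNIV. (m * \<mu> y - w y) * q y b = 0"
      using sum_nonneg_eq_0_iff[of UNIV "\<lambda>y. (m * \<mu> y - w y) * q y b"] by simp
    then have "(m * \<mu> a - w a) * q a b = 0" by blast
    then show ?thesis using that(1) by simp
  qed
  have all: "w y = m * \<mu> y" for y
  proof (cases "y = x0")
    case False
    have "(y, x0) \<in> ?E\<^sup>+" using irr unfolding irreducible_def by blast
    then show ?thesis using closed_pred[of y x0 ?E "\<lambda>z. w z = m * \<mu> z"] x0 cl by blast
  qed (use x0 in simp)
  then have "(\<Sum>y\<in>UNIV. w y) = m * (\<Sum>y\<in>UNIV. \<mu> y)" by (simp add: sum_distrib_left)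
  also have "\<dots> = m" using st by (simp add: stationary_def)
  finally show ?thesis using all by simp
qed

lemma W_nonneg: "transition_matrix q \<Longrightarrow> W q r \<ge> 0"
  unfolding W_def by (simp add: sum_nonneg gweight_nonneg)

lemma W_pos:
  fixes q :: "'a::finite \<Rightarrow> 'a \<Rightarrow> real"
  assumes tm: "transition_matrix q" and irr: "irreducible q"
  shows "W q r > 0"
proof -
  obtain g where g: "g \<in> Cgraphs (-{r})" "\<forall>x\<in>-{r}. q x (g x) > 0"
    using pos_graph[OF irr, of "{r}"] by auto
  have "gweight q (-{r}) g > 0" unfolding gweight_def by (rule prod_pos) (use g(2) in auto)
  also have "gweight q (-{r}) g \<le> W q r" unfolding W_def
    by (rule member_le_sum) (use g tm gweight_nonneg in auto)
  finally show ?thesis .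
qed

definition Zs :: "('a::finite \<Rightarrow> 'a \<Rightarrow> real) \<Rightarrow> real" where
  "Zs q = (\<Sum>r\<in>UNIV. W q r)"

lemma Zs_pos: "transition_matrix q \<Longrightarrow> irreducible q \<Longrightarrow> Zs q > 0"
  unfolding Zs_def by (metis W_pos finite sum_pos UNIV_not_empty)

lemma tree_thm:
  fixes q :: "'a::finite \<Rightarrow> 'a \<Rightarrow> real"
  assumes tm: "transition_matrix q" and irr: "irreducible q" and st: "stationary q \<mu>"
  shows "\<mu> x * Zs q = W q x"
  using stationary_unique[OF tm irr st W_stationary[OF tm], of x] unfolding Zs_def by simp

definition anc :: "('a \<Rightarrow> 'a) \<Rightarrow> 'a set \<Rightarrow> 'a \<Rightarrow> 'a set" where
  "anc g D s = {x. (x, s) \<in> (rel g D)\<^sup>*}"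

context
  fixes g :: "'a::finite \<Rightarrow> 'a" and D :: "'a set" and s :: 'a
  assumes gD: "g \<in> Cgraphs D" and sD: "s \<in> D"
begin

lemma anc_sub: "anc g D s \<subseteq> D"
proof
  fix x assume "x \<in> anc g D s"
  then have a: "(x, s) \<in> (rel g D)\<^sup>*" by (simp add: anc_def)
  from a show "x \<in> D"
  proof (cases rule: converse_rtranclE)
    case base then show ?thesis using sD by simp
  next
    case (step z) then show ?thesis by simp
  qed
qed

lemma anc_s: "s \<in> anc g D s" by (simp add: anc_def)

lemma acyc: "acyclic (rel g D)" using gD by (simp add: Cgraphs_iff)

lemma anc_gs: "g s \<notin> anc g D s"
proof
  assume "g s \<in> anc g D s"
  then have "(g s, s) \<in> (rel g D)\<^sup>*" by (simp add: anc_def)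
  moreover have "(s, g s) \<in> rel g D" using sD by simp
  ultimately have "(s, s) \<in> (rel g D)\<^sup>+" by (meson rtrancl_into_trancl2)
  then show False using acyc by (simp add: acyclic_def)
qed

lemma anc_step: "x \<in> anc g D s - {s} \<Longrightarrow> g x \<in> anc g D s"
proof -
  assume x: "x \<in> anc g D s - {s}"
  then have a: "(x, s) \<in> (rel g D)\<^sup>*" "x \<noteq> s" by (auto simp: anc_def)
  from a(1) show ?thesis
  proof (cases rule: converse_rtranclE)
    case base then show ?thesis using a(2) by simp
  next
    case (step z) then show ?thesis by (simp add: anc_def)
  qed
qed

lemma anc_out: "x \<in> D - anc g D s \<Longrightarrow> g x \<notin> anc g D s"
proof
  assume x: "x \<in> D - anc g D s" and "g x \<in> anc g D s"
  then have "(g x, s) \<in> (rel g D)\<^sup>*" by (simp add: anc_def)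
  moreover have "(x, g x) \<in> rel g D" using x by simp
  ultimately have "(x, s) \<in> (rel g D)\<^sup>*" by (meson converse_rtrancl_into_rtrancl)
  then show False using x by (simp add: anc_def)
qed

definition "tpart = (\<lambda>x. if x \<in> anc g D s - {s} then g x else x)"

lemma tpart_C: "tpart \<in> Cgraphs (anc g D s - {s})"
proof -
  have "rel tpart (anc g D s - {s}) \<subseteq> rel g D" using anc_sub by (auto simp: tpart_def rel_def)
  then have "acyclic (rel tpart (anc g D s - {s}))" using acyc acyclic_subset by blast
  then show ?thesis unfolding Cgraphs_iff by (auto simp: tpart_def)
qed

lemma tpart_in: "x \<in> anc g D s - {s} \<Longrightarrow> tpart x \<in> anc g D s"
  using anc_step by (simp add: tpart_def)

definition "ext a = (\<lambda>x. if x \<in> anc g D s then a x else g x)"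

lemma ext_C: assumes "a \<in> Cgraphs (anc g D s)" shows "ext a \<in> Cgraphs D"
proof -
  let ?B = "anc g D s"
  have eq: "rel (ext a) D = rel g (D - ?B) \<union> rel a ?B"
    using anc_sub by (auto simp: ext_def rel_def)
  have "acyclic (rel g (D - ?B))" using acyc by (rule acyclic_subset) (auto simp: rel_def)
  moreover have "acyclic (rel a ?B)" using assms by (simp add: Cgraphs_iff)
  moreover have "Domain (rel a ?B) \<inter> Range (rel g (D - ?B)) = {}"
    using anc_out by (auto simp: rel_def)
  ultimately have "acyclic (rel (ext a) D)" unfolding eq by (rule acyclic_Un_dom)
  moreover have "\<forall>x. x \<notin> D \<longrightarrow> ext a x = x"
    using gD anc_sub by (auto simp: ext_def Cgraphs_iff)
  ultimately show ?thesis by (simp add: Cgraphs_iff)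
qed

lemma gweight_split: "gweight q D f = gweight q (anc g D s) f * gweight q (D - anc g D s) f"
  unfolding gweight_def using anc_sub by (simp add: prod.subset_diff mult.commute)

lemma gweight_ext: "gweight q D (ext a) = gweight q (anc g D s) a * gweight q (D - anc g D s) g"
  unfolding gweight_split[of q "ext a"] unfolding gweight_def ext_def by simp

lemma gweight_B: "gweight q (anc g D s) g = q s (g s) * gweight q (anc g D s - {s}) tpart"
  unfolding gweight_def tpart_def using anc_s by (simp add: prod.remove)

end

lemma cut_bound:
  fixes q :: "'a::finite \<Rightarrow> 'a \<Rightarrow> real" and B :: "'a set"
  assumes tm: "transition_matrix q"
  shows "(\<Sum>u\<in>B. W q u * qset q (-B) u) \<le> real (card B) *
     ((\<Sum>a\<in>Cgraphs B. gweight q B a) * (\<Sum>b\<in>Cgraphs (-B). gweight q (-B) b))"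
proof -
  let ?G = "\<lambda>p. gweight q B (fst p) * gweight q (-B) (snd p)"
  let ?SA = "\<lambda>f. (\<lambda>x. if x \<in> B then f x else x)"
  let ?SB = "\<lambda>f. (\<lambda>x. if x \<in> B then x else f x)"
  have Pw_split: "Pw q f = gweight q B (?SA f) * gweight q (-B) (?SB f)" for f
  proof -
    have "Pw q f = (\<Prod>x\<in>B. q x (f x)) * (\<Prod>x\<in>-B. q x (f x))"
    proof -
      have "UNIV = B \<union> -B" by auto
      then have "Pw q f = (\<Prod>x\<in>B \<union> -B. q x (f x))" unfolding Pw_def by simp
      also have "\<dots> = (\<Prod>x\<in>B. q x (f x)) * (\<Prod>x\<in>-B. q x (f x))"
        by (rule prod.union_disjoint) auto
      finally show ?thesis .
    qed
    then show ?thesis unfolding gweight_def by simp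
  qed
  have one: "W q u * qset q (-B) u \<le> (\<Sum>a\<in>Cgraphs B. gweight q B a) * (\<Sum>b\<in>Cgraphs (-B). gweight q (-B) b)"
    if u: "u \<in> B" for u
  proof -
    let ?T = "Cgraphs (-{u})"
    let ?phi = "\<lambda>(h, v). (?SA (h(u:=v)), ?SB (h(u:=v)))"
    have inj: "inj_on ?phi (?T \<times> -B)"
      proof (rule inj_onI)
        fix x y assume x: "x \<in> ?T \<times> -B" and y: "y \<in> ?T \<times> -B" and e: "?phi x = ?phi y"
        obtain h1 v1 where x1: "x = (h1, v1)" by fastforce
        obtain h2 v2 where y1: "y = (h2, v2)" by fastforce
        have eA: "?SA (h1(u:=v1)) = ?SA (h2(u:=v2))" and eB: "?SB (h1(u:=v1)) = ?SB (h2(u:=v2))"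
          using e unfolding x1 y1 by simp_all
        have "h1(u:=v1) = h2(u:=v2)"
        proof
          fix z
          show "(h1(u:=v1)) z = (h2(u:=v2)) z"
          proof (cases "z \<in> B")
            case True
            then show ?thesis using fun_cong[OF eA, of z] by (simp only: if_True)
          next
            case False
            then show ?thesis using fun_cong[OF eB, of z] by (simp only: if_False)
          qed
        qed
        moreover have "h1 u = u" "h2 u = u" using x y x1 y1 by (auto simp: Cgraphs_iff)
        ultimately have "v1 = v2" "h1 = h2"
        proof -
          assume e2: "h1(u:=v1) = h2(u:=v2)" and hu: "h1 u = u" "h2 u = u"
          have "v1 = (h1(u:=v1)) u" by simp
          also have "\<dots> = v2" using e2 by simp
          finally show "v1 = v2" .
          have "h1 = (h1(u:=v1))(u:=u)" using fun_upd_idem[of h1 u u, OF hu(1)] by simp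
          also have "\<dots> = (h2(u:=v2))(u:=u)" using e2 by simp
          also have "\<dots> = h2" using fun_upd_idem[of h2 u u, OF hu(2)] by simp
          finally show "h1 = h2" .
        qed
        then show "x = y" using x1 y1 by simp
      qed
    have "W q u * qset q (-B) u = (\<Sum>h\<in>?T. gweight q (-{u}) h * (\<Sum>v\<in>-B. q u v))"
      unfolding W_def qset_def by (rule sum_distrib_right)
    also have "\<dots> = (\<Sum>h\<in>?T. \<Sum>v\<in>-B. Pw q (h(u:=v)))"
      by (simp only: Pw_upd sum_distrib_left)
    also have "\<dots> = (\<Sum>(h,v)\<in>?T \<times> -B. Pw q (h(u:=v)))"
      by (rule sum.cartesian_product)
    also have "\<dots> = (\<Sum>x\<in>?T \<times> -B. ?G (?phi x))"
      by (rule sum.cong) (auto simp: Pw_split)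
    also have "\<dots> = sum ?G (?phi ` (?T \<times> -B))"
      by (simp add: sum.reindex[OF inj] comp_def)
    also have "\<dots> \<le> sum ?G (Cgraphs B \<times> Cgraphs (-B))"
    proof (rule sum_mono2)
      show "finite (Cgraphs B \<times> Cgraphs (-B))" by simp
      show "?phi ` (?T \<times> -B) \<subseteq> Cgraphs B \<times> Cgraphs (-B)"
      proof
        fix p assume "p \<in> ?phi ` (?T \<times> -B)"
        then obtain h v where hv: "h \<in> ?T" "v \<notin> B" and p: "p = ?phi (h, v)" by auto
        have hac: "acyclic (rel h (-{u}))" and hu: "h u = u" using hv(1) by (auto simp: Cgraphs_iff)
        have eqA: "rel (?SA (h(u:=v))) B = insert (u, v) (rel h (B - {u}))"
          using u by (auto simp: rel_def)
        have "acyclic (rel h (B - {u}))" using hac by (rule acyclic_subset) (auto simp: rel_def)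
        moreover have "(v, u) \<notin> (rel h (B - {u}))\<^sup>*"
        proof
          assume "(v, u) \<in> (rel h (B - {u}))\<^sup>*"
          then have "u = v" by (rule no_out_rtrancl) (use hv(2) in simp)
          then show False using u hv(2) by simp
        qed
        ultimately have A: "?SA (h(u:=v)) \<in> Cgraphs B"
          unfolding Cgraphs_iff eqA by auto
        have eqB: "rel (?SB (h(u:=v))) (-B) = rel h (-B)"
          using u by (auto simp: rel_def)
        have "acyclic (rel h (-B))" using hac by (rule acyclic_subset) (use u in \<open>auto simp: rel_def\<close>)
        then have Bm: "?SB (h(u:=v)) \<in> Cgraphs (-B)"
          unfolding Cgraphs_iff eqB by auto
        show "p \<in> Cgraphs B \<times> Cgraphs (-B)" using A Bm p by simp
      qed
      show "0 \<le> ?G x" for x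
        using gweight_nonneg[OF tm] by simp
    qed
    also have "\<dots> = (\<Sum>a\<in>Cgraphs B. gweight q B a) * (\<Sum>b\<in>Cgraphs (-B). gweight q (-B) b)"
      by (simp add: sum_product sum.cartesian_product case_prod_beta)
    finally show ?thesis .
  qed
  have "(\<Sum>u\<in>B. W q u * qset q (-B) u) \<le> (\<Sum>u\<in>B. (\<Sum>a\<in>Cgraphs B. gweight q B a) * (\<Sum>b\<in>Cgraphs (-B). gweight q (-B) b))"
    by (rule sum_mono) (rule one)
  also have "\<dots> = real (card B) * ((\<Sum>a\<in>Cgraphs B. gweight q B a) * (\<Sum>b\<in>Cgraphs (-B). gweight q (-B) b))"
    by simp
  finally show ?thesis .
qed

lemma tree_lower:
  fixes q :: "'a::finite \<Rightarrow> 'a \<Rightarrow> real" and B :: "'a set"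
  assumes tm: "transition_matrix q" and sB: "s \<in> B"
    and t: "t \<in> Cgraphs (B - {s})" and tin: "\<And>x. x \<in> B - {s} \<Longrightarrow> t x \<in> B"
  shows "gweight q (B - {s}) t * (\<Sum>b\<in>Cgraphs (-B). gweight q (-B) b) \<le> W q s"
proof -
  let ?c = "\<lambda>b. (\<lambda>x. if x \<in> B then t x else b x)"
  have tac: "acyclic (rel t (B - {s}))" and ts: "t s = s" using t by (auto simp: Cgraphs_iff)
  have cm: "?c b \<in> Cgraphs (-{s})" if b: "b \<in> Cgraphs (-B)" for b
  proof -
    have eq: "rel (?c b) (-{s}) = rel t (B - {s}) \<union> rel b (-B)"
      using sB by (auto simp: rel_def)
    have "acyclic (rel b (-B))" using b by (simp add: Cgraphs_iff)
    moreover have "Domain (rel b (-B)) \<inter> Range (rel t (B - {s})) = {}"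
      using tin by (auto simp: rel_def)
    ultimately have "acyclic (rel (?c b) (-{s}))" unfolding eq using tac by (intro acyclic_Un_dom)
    then show ?thesis unfolding Cgraphs_iff using ts sB by auto
  qed
  have wc: "gweight q (-{s}) (?c b) = gweight q (B - {s}) t * gweight q (-B) b" for b
  proof -
    have e: "-{s} = (B - {s}) \<union> (-B)" using sB by auto
    have "gweight q (-{s}) (?c b) = (\<Prod>x\<in>B - {s}. q x (?c b x)) * (\<Prod>x\<in>-B. q x (?c b x))"
      unfolding gweight_def e by (rule prod.union_disjoint) auto
    also have "(\<Prod>x\<in>B - {s}. q x (?c b x)) = gweight q (B - {s}) t"
      unfolding gweight_def by (rule prod.cong) auto
    also have "(\<Prod>x\<in>-B. q x (?c b x)) = gweight q (-B) b"
      unfolding gweight_def by (rule prod.cong) auto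
    finally show ?thesis .
  qed
  have inj: "inj_on ?c (Cgraphs (-B))"
  proof (rule inj_onI)
    fix b1 b2 assume b: "b1 \<in> Cgraphs (-B)" "b2 \<in> Cgraphs (-B)" and e: "?c b1 = ?c b2"
    show "b1 = b2"
    proof
      fix x show "b1 x = b2 x"
        using b fun_cong[OF e, of x] by (cases "x \<in> B") (auto simp: Cgraphs_iff)
    qed
  qed
  have "gweight q (B - {s}) t * (\<Sum>b\<in>Cgraphs (-B). gweight q (-B) b) = (\<Sum>b\<in>Cgraphs (-B). gweight q (-{s}) (?c b))"
    by (simp add: wc sum_distrib_left)
  also have "\<dots> = (\<Sum>h\<in>?c ` Cgraphs (-B). gweight q (-{s}) h)"
    by (rule sum.reindex[symmetric, OF inj, unfolded comp_def])
  also have "\<dots> \<le> W q s" unfolding W_def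
    by (rule sum_mono2) (use cm gweight_nonneg[OF tm] in auto)
  finally show ?thesis .
qed

definition Kc :: "nat \<Rightarrow> real" where "Kc n = real n * real ((n - 1) ^ n)"

lemma Kc_pos: "n \<ge> 2 \<Longrightarrow> Kc n > 0"
  unfolding Kc_def by simp

lemma Kc_L: "n \<ge> 2 \<Longrightarrow> Kc n \<le> real (L_const n)"
proof -
  assume n: "n \<ge> 2"
  have "n choose (n - 1) = n choose 1" using n by (subst binomial_symmetric) auto
  then have c: "n choose (n - 1) = n" by simp
  have "(n choose (n - 1)) * (n - 1) ^ n \<le> (\<Sum>k=1..n-1. (n choose k) * k ^ n)"
    by (rule member_le_sum[where f = "\<lambda>k. (n choose k) * k ^ n"]) (use n in auto)
  then have "n * (n - 1) ^ n \<le> L_const n" unfolding L_const_def c .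
  then have "real (n * (n - 1) ^ n) \<le> real (L_const n)" by (simp only: of_nat_le_iff)
  then show ?thesis unfolding Kc_def by (simp only: of_nat_mult)
qed

lemma zeta_le:
  fixes q :: "'a::finite \<Rightarrow> 'a \<Rightarrow> real"
  assumes "B \<noteq> {}" "B \<noteq> UNIV"
  shows "zeta q \<mu> \<le> (\<Sum>u\<in>B. \<mu> u * qset q (-B) u)"
  unfolding zeta_def by (rule Min_le) (use assms in auto)

lemma exit_edge:
  assumes "(x, y) \<in> E\<^sup>+" "x \<in> C" "y \<notin> C"
  shows "\<exists>a\<in>C. \<exists>b. b \<notin> C \<and> (a, b) \<in> E"
  using assms
proof (induction rule: trancl_induct)
  case (base y) then show ?case by blast
next
  case (step y z)
  then show ?case by (cases "y \<in> C") auto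
qed

lemma zeta_pos:
  fixes q :: "'a::finite \<Rightarrow> 'a \<Rightarrow> real"
  assumes tm: "transition_matrix q" and irr: "irreducible q" and st: "stationary q \<mu>"
    and N: "card (UNIV::'a set) \<ge> 2"
  shows "zeta q \<mu> > 0"
proof -
  let ?A = "{C::'a set. C \<noteq> {} \<and> C \<noteq> UNIV}"
  have fin: "finite ((\<lambda>C. \<Sum>s\<in>C. \<mu> s * qset q (- C) s) ` ?A)" by simp
  obtain x y :: 'a where xy: "x \<noteq> y"
  proof -
    have "\<not> (\<forall>x y::'a. x = y)"
    proof
      assume "\<forall>x y::'a. x = y"
      then have "(UNIV::'a set) \<subseteq> {undefined}" by auto
      then have "card (UNIV::'a set) \<le> card {undefined::'a}" by (rule card_mono[rotated]) simp
      then have "card (UNIV::'a set) \<le> 1" by simp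
      then show False using N by simp
    qed
    then show ?thesis using that by blast
  qed
  have ne: "?A \<noteq> {}"
  proof -
    have "{x} \<in> ?A" using xy by auto
    then show ?thesis by blast
  qed
  have pos: "(\<Sum>s\<in>C. \<mu> s * qset q (- C) s) > 0" if C: "C \<in> ?A" for C
  proof -
    obtain x where x: "x \<in> C" using C by auto
    obtain y where y: "y \<notin> C" using C by auto
    have "(x, y) \<in> {(x, y). q x y > 0}\<^sup>+" using irr unfolding irreducible_def by blast
    then obtain a b where ab: "a \<in> C" "b \<notin> C" "q a b > 0" using exit_edge[OF _ x y] by blast
    have nn: "\<mu> s * qset q (- C) s \<ge> 0" for s
      using st tm unfolding stationary_def transition_matrix_def qset_def by (simp add: sum_nonneg)
    have "q a b \<le> qset q (-C) a" unfolding qset_def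
      by (rule member_le_sum) (use ab tm in \<open>auto simp: transition_matrix_def\<close>)
    then have "0 < \<mu> a * qset q (-C) a"
      using ab(3) mu_pos[OF tm irr st, of a] by (simp add: mult_pos_pos)
    also have "\<dots> \<le> (\<Sum>s\<in>C. \<mu> s * qset q (- C) s)"
      by (rule member_le_sum) (use ab nn in auto)
    finally show ?thesis .
  qed
  show ?thesis unfolding zeta_def using fin ne pos by (simp add: Min_gr_iff)
qed

lemma P1:
  fixes q :: "'a::finite \<Rightarrow> 'a \<Rightarrow> real" and D :: "'a set"
  assumes tm: "transition_matrix q" and irr: "irreducible q" and st: "stationary q \<mu>"
    and N: "card (UNIV::'a set) \<ge> 2"
    and DU: "D \<noteq> UNIV" and gD: "g \<in> Cgraphs D" and sD: "s \<in> D" and b: "b > 0"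
    and gw: "gweight q D g \<ge> b * Max (gweight q D ` Cgraphs D)"
  shows "b * zeta q \<mu> \<le> \<mu> s * q s (g s) * Kc (card (UNIV::'a set))"
proof -
  define B where "B = anc g D s"
  define N where "N = card (UNIV::'a set)"
  define Z where "Z = Zs q"
  define MD where "MD = Max (gweight q D ` Cgraphs D)"
  define MB where "MB = Max (gweight q B ` Cgraphs B)"
  define SB where "SB = (\<Sum>a\<in>Cgraphs B. gweight q B a)"
  define Y where "Y = (\<Sum>b\<in>Cgraphs (-B). gweight q (-B) b)"
  define pt where "pt = gweight q (B - {s}) (tpart g D s)"
  have BD: "B \<subseteq> D" unfolding B_def by (rule anc_sub[OF gD sD])
  have sB: "s \<in> B" unfolding B_def by (rule anc_s[OF gD sD])
  have BU: "B \<noteq> UNIV" using BD DU by auto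
  have Bne: "B \<noteq> {}" using sB by auto
  have Zp: "Z > 0" unfolding Z_def by (rule Zs_pos[OF tm irr])
  have MDp: "MD > 0" unfolding MD_def by (rule pos_Max(2)[OF irr DU])
  have MBp: "MB > 0" unfolding MB_def by (rule pos_Max(2)[OF irr BU])
  obtain a where aB: "a \<in> Cgraphs B" and aM: "gweight q B a = MB"
    using pos_Max(3)[OF irr BU] unfolding MB_def by blast
  have split: "gweight q D g = gweight q B g * gweight q (D - B) g"
    unfolding B_def by (rule gweight_split[OF gD sD])
  have gBn: "gweight q B g \<ge> 0" and gDBn: "gweight q (D - B) g \<ge> 0"
    using gweight_nonneg[OF tm] by auto
  have "b * MD > 0" using b MDp by simp
  then have gpos: "gweight q D g > 0" using gw unfolding MD_def by linarith
  have gDBp: "gweight q (D - B) g > 0"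
  proof (rule ccontr)
    assume "\<not> gweight q (D - B) g > 0"
    then have "gweight q (D - B) g = 0" using gDBn by simp
    then show False using gpos split by simp
  qed
  have "ext g D s a \<in> Cgraphs D" using ext_C[OF gD sD] aB unfolding B_def by blast
  then have "gweight q D (ext g D s a) \<le> MD" unfolding MD_def by simp
  moreover have "gweight q D (ext g D s a) = MB * gweight q (D - B) g"
    using gweight_ext[OF gD sD, of q a] aM unfolding B_def by simp
  ultimately have "b * (MB * gweight q (D - B) g) \<le> b * MD" using b by simp
  also have "\<dots> \<le> gweight q B g * gweight q (D - B) g" using gw split unfolding MD_def by simp
  finally have "(b * MB) * gweight q (D - B) g \<le> gweight q B g * gweight q (D - B) g"
    by (simp add: mult.assoc)
  then have bMB: "b * MB \<le> gweight q B g" using gDBp by (rule mult_right_le_imp_le)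
  have gB: "gweight q B g = q s (g s) * pt"
    unfolding B_def pt_def by (rule gweight_B[OF gD sD])
  have Yn: "Y \<ge> 0" unfolding Y_def using gweight_nonneg[OF tm] by (simp add: sum_nonneg)
  have SBn: "SB \<ge> 0" unfolding SB_def using gweight_nonneg[OF tm] by (simp add: sum_nonneg)
  have ptn: "pt \<ge> 0" unfolding pt_def using gweight_nonneg[OF tm] by simp
  have qn: "q s (g s) \<ge> 0" using tm by (simp add: transition_matrix_def)
  have "zeta q \<mu> \<le> (\<Sum>u\<in>B. \<mu> u * qset q (-B) u)" by (rule zeta_le[OF Bne BU])
  then have "zeta q \<mu> * Z \<le> (\<Sum>u\<in>B. \<mu> u * qset q (-B) u) * Z" using Zp by simp
  also have "\<dots> = (\<Sum>u\<in>B. W q u * qset q (-B) u)"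
    unfolding sum_distrib_right Z_def
  proof (rule sum.cong)
    fix u
    have "W q u = \<mu> u * Zs q" by (rule tree_thm[OF tm irr st, symmetric])
    then show "\<mu> u * qset q (- B) u * Zs q = W q u * qset q (- B) u" by simp
  qed simp
  also have "\<dots> \<le> real (card B) * (SB * Y)"
    unfolding SB_def Y_def by (rule cut_bound[OF tm])
  also have "\<dots> \<le> Kc N * MB * Y"
  proof -
    have "SB \<le> real (card (Cgraphs B)) * MB" unfolding SB_def MB_def
      by (rule sum_bounded_above[where K = "Max (gweight q B ` Cgraphs B)", simplified]) simp
    also have "\<dots> \<le> real ((N - 1) ^ N) * MB"
      using card_Cgraphs[OF N, of B] MBp unfolding N_def by (simp add: mult_right_mono)
    finally have 1: "SB \<le> real ((N - 1) ^ N) * MB" .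
    have 2: "real (card B) \<le> real N" unfolding N_def by (simp add: card_mono)
    have "real (card B) * SB \<le> real N * (real ((N - 1) ^ N) * MB)"
      using 1 2 SBn by (intro mult_mono) auto
    then have "real (card B) * SB * Y \<le> real N * (real ((N - 1) ^ N) * MB) * Y"
      using Yn by (rule mult_right_mono)
    then show ?thesis unfolding Kc_def by (simp add: mult.assoc)
  qed
  finally have zZ: "zeta q \<mu> * Z \<le> Kc N * MB * Y" .
  have Kp: "Kc N > 0" unfolding N_def by (rule Kc_pos[OF N])
  have tC: "tpart g D s \<in> Cgraphs (B - {s})" unfolding B_def by (rule tpart_C[OF gD sD])
  have tin: "\<And>x. x \<in> B - {s} \<Longrightarrow> tpart g D s x \<in> B" unfolding B_def by (rule tpart_in[OF gD sD])
  have tl: "pt * Y \<le> \<mu> s * Z"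
    unfolding pt_def Y_def Z_def tree_thm[OF tm irr st]
    by (rule tree_lower[OF tm sB tC tin])
  have "b * (zeta q \<mu> * Z) \<le> b * (Kc N * MB * Y)" using zZ b by simp
  also have "\<dots> = Kc N * (b * MB) * Y" by simp
  also have "\<dots> \<le> Kc N * gweight q B g * Y"
    using bMB Kp Yn by (simp add: mult_right_mono)
  also have "\<dots> = Kc N * q s (g s) * (pt * Y)" using gB by simp
  also have "\<dots> \<le> Kc N * q s (g s) * (\<mu> s * Z)"
    using tl Kp qn by (simp add: mult_left_mono)
  finally have "(b * zeta q \<mu>) * Z \<le> (\<mu> s * q s (g s) * Kc N) * Z" by (simp add: algebra_simps)
  then show ?thesis using Zp unfolding N_def by (rule mult_right_le_imp_le)
qed

lemma zZ_bound:
  fixes q :: "'a::finite \<Rightarrow> 'a \<Rightarrow> real" and B :: "'a set"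
  assumes tm: "transition_matrix q" and irr: "irreducible q" and st: "stationary q \<mu>"
    and N: "card (UNIV::'a set) \<ge> 2" and Bne: "B \<noteq> {}" and BU: "B \<noteq> UNIV"
  shows "zeta q \<mu> * Zs q \<le> Kc (card (UNIV::'a set)) * Max (gweight q B ` Cgraphs B)
           * (\<Sum>b\<in>Cgraphs (-B). gweight q (-B) b)"
proof -
  define N where "N = card (UNIV::'a set)"
  define Z where "Z = Zs q"
  define MB where "MB = Max (gweight q B ` Cgraphs B)"
  define SB where "SB = (\<Sum>a\<in>Cgraphs B. gweight q B a)"
  define Y where "Y = (\<Sum>b\<in>Cgraphs (-B). gweight q (-B) b)"
  have Zp: "Z > 0" unfolding Z_def by (rule Zs_pos[OF tm irr])
  have MBp: "MB > 0" unfolding MB_def by (rule pos_Max(2)[OF irr BU])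
  have Yn: "Y \<ge> 0" unfolding Y_def using gweight_nonneg[OF tm] by (simp add: sum_nonneg)
  have SBn: "SB \<ge> 0" unfolding SB_def using gweight_nonneg[OF tm] by (simp add: sum_nonneg)
  have "zeta q \<mu> \<le> (\<Sum>u\<in>B. \<mu> u * qset q (-B) u)" by (rule zeta_le[OF Bne BU])
  then have "zeta q \<mu> * Z \<le> (\<Sum>u\<in>B. \<mu> u * qset q (-B) u) * Z" using Zp by simp
  also have "\<dots> = (\<Sum>u\<in>B. W q u * qset q (-B) u)"
    unfolding sum_distrib_right Z_def
  proof (rule sum.cong)
    fix u
    have "W q u = \<mu> u * Zs q" by (rule tree_thm[OF tm irr st, symmetric])
    then show "\<mu> u * qset q (- B) u * Zs q = W q u * qset q (- B) u" by simp
  qed simp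
  also have "\<dots> \<le> real (card B) * (SB * Y)"
    unfolding SB_def Y_def by (rule cut_bound[OF tm])
  also have "\<dots> \<le> Kc N * MB * Y"
  proof -
    have "SB \<le> real (card (Cgraphs B)) * MB" unfolding SB_def MB_def
      by (rule sum_bounded_above[where K = "Max (gweight q B ` Cgraphs B)", simplified]) simp
    also have "\<dots> \<le> real ((N - 1) ^ N) * MB"
      using card_Cgraphs[OF N, of B] MBp unfolding N_def by (simp add: mult_right_mono)
    finally have 1: "SB \<le> real ((N - 1) ^ N) * MB" .
    have 2: "real (card B) \<le> real N" unfolding N_def by (simp add: card_mono)
    have "real (card B) * SB \<le> real N * (real ((N - 1) ^ N) * MB)"
      using 1 2 SBn by (intro mult_mono) auto
    then have "real (card B) * SB * Y \<le> real N * (real ((N - 1) ^ N) * MB) * Y"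
      using Yn by (rule mult_right_mono)
    then show ?thesis unfolding Kc_def by (simp add: mult.assoc)
  qed
  finally show ?thesis unfolding N_def Z_def MB_def Y_def .
qed

lemma two_pow: "n \<ge> 1 \<Longrightarrow> 2 * n \<le> (2::nat) ^ n"
proof (induction n)
  case (Suc n)
  then show ?case by (cases "n = 0") auto
qed simp

lemma numerics:
  fixes b :: real and N :: nat
  assumes N: "N \<ge> 2" and b0: "0 < b" and b1: "b < 1 / 2 ^ N"
  shows "(1 - b) ^ N \<ge> 1/2" "(1 + b) ^ N \<le> 2"
proof -
  have p: "(2::real) ^ N > 0" by simp
  have "real (2 * N) \<le> real (2 ^ N)" using two_pow[of N] N by (simp only: of_nat_le_iff)
  then have tn: "2 * real N \<le> 2 ^ N" by simp
  have "b * 2 ^ N < 1" using b1 p by (simp add: field_simps)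
  then have "real N * b * 2 \<le> b * 2 ^ N" using tn b0 by (simp add: mult_left_mono mult.commute mult.left_commute)
  then have Nb: "real N * b \<le> 1/2" using \<open>b * 2 ^ N < 1\<close> by linarith
  have "(1::real) \<le> 2 ^ N" by simp
  then have "b * 1 \<le> b * 2 ^ N" using b0 by (intro mult_left_mono) auto
  then have bb: "b < 1" using \<open>b * 2 ^ N < 1\<close> by linarith
  have "1 + real N * (- b) \<le> (1 + (- b)) ^ N"
    by (rule Bernoulli_inequality) (use bb in simp)
  then show 1: "(1 - b) ^ N \<ge> 1/2" using Nb by simp
  have "(1 + b) ^ N * (1 - b) ^ N = (1 - b * b) ^ N" by (simp add: power_mult_distrib[symmetric] algebra_simps)
  also have "\<dots> \<le> 1" using b0 bb by (intro power_le_one) (auto simp: mult_le_one)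
  finally have "(1 + b) ^ N * (1 - b) ^ N \<le> 1" .
  then have "(1 + b) ^ N * (1/2) \<le> 1" using 1
    by (smt (verit) mult_left_mono zero_le_power b0)
  then show "(1 + b) ^ N \<le> 2" by simp
qed

lemma big_lower:
  assumes cl: "close \<epsilon> \<beta> q \<mu> qh" and ez: "\<epsilon> * zeta q \<mu> > 0" and mu: "\<mu> x \<ge> 0"
    and qn: "q x y \<ge> 0" and big: "\<mu> x * q x y \<ge> \<epsilon> * zeta q \<mu>"
  shows "qh x y \<ge> (1 - \<beta>) * q x y" "q x y > 0"
proof -
  have ab: "\<bar>1 - qh x y / q x y\<bar> \<le> \<beta>" using cl big unfolding close_def by blast
  have "\<mu> x * q x y > 0" using big ez by linarith
  then show qp: "q x y > 0" using mu qn by (simp add: zero_less_mult_iff)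
  have "1 - \<beta> \<le> qh x y / q x y" using ab by linarith
  then show "qh x y \<ge> (1 - \<beta>) * q x y" using qp by (simp add: le_divide_eq)
qed

lemma big_upper:
  assumes cl: "close \<epsilon> \<beta> q \<mu> qh" and big: "\<mu> x * qh x y \<ge> \<epsilon> * zeta q \<mu>"
  shows "qh x y \<le> (1 + \<beta>) * q x y"
proof -
  have qp: "q x y > 0" and ab: "\<bar>1 - qh x y / q x y\<bar> \<le> \<beta>" using cl big unfolding close_def by blast+
  have "qh x y / q x y \<le> 1 + \<beta>" using ab by linarith
  then show ?thesis using qp by (simp add: divide_le_eq)
qed

lemma Gbeta_iff: "g \<in> Gbeta b q C \<longleftrightarrow> g \<in> Cgraphs C \<and> gweight q C g \<ge> b * Max (gweight q C ` Cgraphs C)"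
  by (simp add: Gbeta_def)

context
  fixes q qh :: "'a::finite \<Rightarrow> 'a \<Rightarrow> real" and \<mu> :: "'a \<Rightarrow> real" and \<beta> \<epsilon> :: real
  assumes N: "card (UNIV::'a set) \<ge> 2"
    and b0: "0 < \<beta>" and b1: "\<beta> < 1 / 2 ^ (card (UNIV::'a set))"
    and e0: "0 < \<epsilon>"
    and eps: "\<epsilon> < \<beta> * (1 - \<beta>) / (real (L_const (card (UNIV::'a set))) * real (card (UNIV::'a set)) ^ 4)"
    and tm: "transition_matrix q" and irr: "irreducible q" and st: "stationary q \<mu>"
    and tmh: "transition_matrix qh" and cl: "close \<epsilon> \<beta> q \<mu> qh"
begin


lemma Kp: "Kc (card (UNIV::'a set)) > 0" using Kc_pos[OF N] .

lemma zp: "zeta q \<mu> > 0" by (rule zeta_pos[OF tm irr st N])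

lemma ezp: "\<epsilon> * zeta q \<mu> > 0" using e0 zp by simp

lemma b1': "\<beta> < 1"
proof -
  have "(1::real) \<le> 2 ^ (card (UNIV::'a set))" by simp
  then have "1 / 2 ^ (card (UNIV::'a set)) \<le> (1::real)" by simp
  then show ?thesis using b1 by linarith
qed

lemma eK: "\<epsilon> * Kc (card (UNIV::'a set)) * real (card (UNIV::'a set)) ^ 4 < \<beta> * (1 - \<beta>)"
proof -
  have Lp: "real (L_const (card (UNIV::'a set))) \<ge> Kc (card (UNIV::'a set))" by (rule Kc_L[OF N])
  have N4: "real (card (UNIV::'a set)) ^ 4 > 0" using N by simp
  have LN: "real (L_const (card (UNIV::'a set))) * real (card (UNIV::'a set)) ^ 4 > 0" using Lp Kp N4 by simp
  have "\<epsilon> * (real (L_const (card (UNIV::'a set))) * real (card (UNIV::'a set)) ^ 4) < \<beta> * (1 - \<beta>)"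
    using eps LN by (simp add: less_divide_eq)
  moreover have "\<epsilon> * Kc (card (UNIV::'a set)) * real (card (UNIV::'a set)) ^ 4 \<le> \<epsilon> * (real (L_const (card (UNIV::'a set))) * real (card (UNIV::'a set)) ^ 4)"
    using Lp e0 N4 by (simp add: mult.assoc mult_right_mono)
  ultimately show ?thesis by linarith
qed

lemma eK1: "\<epsilon> * Kc (card (UNIV::'a set)) \<le> \<beta>"
proof -
  have N4: "real (card (UNIV::'a set)) ^ 4 \<ge> 1" using N by simp
  have "\<epsilon> * Kc (card (UNIV::'a set)) \<ge> 0" using e0 Kp by simp
  then have "\<epsilon> * Kc (card (UNIV::'a set)) * 1 \<le> \<epsilon> * Kc (card (UNIV::'a set)) * real (card (UNIV::'a set)) ^ 4" using N4 by (intro mult_left_mono) auto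
  moreover have "\<beta> * (1 - \<beta>) \<le> \<beta>" using b0 b1' by (simp add: mult_left_le)
  ultimately show ?thesis using eK by linarith
qed

lemma eK2: "\<epsilon> * Kc (card (UNIV::'a set)) \<le> 1" using eK1 b1' by linarith

lemma max_big:
  assumes DU: "D \<noteq> UNIV" and aD: "a \<in> Cgraphs D" and aM: "gweight q D a = Max (gweight q D ` Cgraphs D)"
    and xD: "x \<in> D"
  shows "\<mu> x * q x (a x) \<ge> \<epsilon> * zeta q \<mu>"
proof -
  have "1 * zeta q \<mu> \<le> \<mu> x * q x (a x) * Kc (card (UNIV::'a set))"
    by (rule P1[OF tm irr st N DU aD xD]) (use aM in simp_all)
  then have "\<epsilon> * zeta q \<mu> \<le> \<epsilon> * (\<mu> x * q x (a x) * Kc (card (UNIV::'a set)))" using e0 by simp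
  also have "\<dots> = (\<epsilon> * Kc (card (UNIV::'a set))) * (\<mu> x * q x (a x))" by simp
  also have "\<dots> \<le> 1 * (\<mu> x * q x (a x))"
  proof (rule mult_right_mono)
    show "\<epsilon> * Kc (card (UNIV::'a set)) \<le> 1" by (rule eK2)
    show "0 \<le> \<mu> x * q x (a x)" using st tm by (simp add: stationary_def transition_matrix_def)
  qed
  finally show ?thesis by simp
qed

lemma part1:
  assumes CU: "C \<noteq> UNIV" and g: "g \<in> Gbeta \<beta> q C" and sC: "s \<in> C"
  shows "\<mu> s * q s (g s) \<ge> \<epsilon> * zeta q \<mu>"
proof -
  have gC: "g \<in> Cgraphs C" and gw: "gweight q C g \<ge> \<beta> * Max (gweight q C ` Cgraphs C)"
    using g by (auto simp: Gbeta_iff)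
  have "\<beta> * zeta q \<mu> \<le> \<mu> s * q s (g s) * Kc (card (UNIV::'a set))" by (rule P1[OF tm irr st N CU gC sC b0 gw])
  moreover have "(\<epsilon> * Kc (card (UNIV::'a set))) * zeta q \<mu> \<le> \<beta> * zeta q \<mu>" using eK1 zp by (simp add: mult_right_mono)
  ultimately have "(\<epsilon> * zeta q \<mu>) * Kc (card (UNIV::'a set)) \<le> (\<mu> s * q s (g s)) * Kc (card (UNIV::'a set))" by (simp add: algebra_simps)
  then show ?thesis using Kp by (rule mult_right_le_imp_le)
qed


lemma part2_step:
  assumes CU: "C \<noteq> UNIV" and g: "g \<in> Gbeta \<beta> qh C" and sC: "s \<in> C"
    and IH: "\<And>x. x \<in> anc g C s - {s} \<Longrightarrow> \<mu> x * qh x (g x) \<ge> \<epsilon> * zeta q \<mu>"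
  shows "\<mu> s * qh s (g s) \<ge> \<epsilon> * zeta q \<mu>"
proof (rule ccontr)
  assume neg: "\<not> \<mu> s * qh s (g s) \<ge> \<epsilon> * zeta q \<mu>"
  define N where "N = card (UNIV::'a set)"
  define K where "K = Kc N"
  define B where "B = anc g C s"
  define MB where "MB = Max (gweight q B ` Cgraphs B)"
  define Mh where "Mh = Max (gweight qh C ` Cgraphs C)"
  define Y where "Y = (\<Sum>b\<in>Cgraphs (-B). gweight q (-B) b)"
  define Z where "Z = Zs q"
  define t where "t = tpart g C s"
  define pt where "pt = gweight q (B - {s}) t"
  define pht where "pht = gweight qh (B - {s}) t"
  have Kp: "K > 0" unfolding K_def N_def by (rule Kp)
  have gC: "g \<in> Cgraphs C" and gw: "gweight qh C g \<ge> \<beta> * Mh"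
    using g by (auto simp: Gbeta_iff Mh_def)
  have BC: "B \<subseteq> C" unfolding B_def by (rule anc_sub[OF gC sC])
  have sB: "s \<in> B" unfolding B_def by (rule anc_s[OF gC sC])
  have BU: "B \<noteq> UNIV" using BC CU by auto
  have Bne: "B \<noteq> {}" using sB by auto
  have Zp: "Z > 0" unfolding Z_def by (rule Zs_pos[OF tm irr])
  have MBp: "MB > 0" unfolding MB_def by (rule pos_Max(2)[OF irr BU])
  have mus: "\<mu> s > 0" by (rule mu_pos[OF tm irr st])
  have qn: "\<And>x y. q x y \<ge> 0" and qhn: "\<And>x y. qh x y \<ge> 0" and mun: "\<And>x. \<mu> x \<ge> 0"
    using tm tmh st by (auto simp: transition_matrix_def stationary_def)
  have Yp: "Y > 0"
  proof -
    have "-B \<noteq> UNIV" using Bne by auto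
    from pos_Max(2,3)[OF irr this] obtain b where b: "b \<in> Cgraphs (-B)"
      and bp: "gweight q (-B) b > 0" by (metis)
    have "gweight q (-B) b \<le> Y" unfolding Y_def
      by (rule member_le_sum) (use b gweight_nonneg[OF tm] in auto)
    then show ?thesis using bp by linarith
  qed
  have Mhp: "Mh > 0"
  proof -
    obtain a0 where a0: "a0 \<in> Cgraphs C" and a0M: "gweight q C a0 = Max (gweight q C ` Cgraphs C)"
      using pos_Max(3)[OF irr CU] by blast
    have "qh x (a0 x) > 0" if "x \<in> C" for x
    proof -
      have big: "\<mu> x * q x (a0 x) \<ge> \<epsilon> * zeta q \<mu>" by (rule max_big[OF CU a0 a0M that])
      have "qh x (a0 x) \<ge> (1 - \<beta>) * q x (a0 x)" "q x (a0 x) > 0"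
        using big_lower[OF cl ezp mun qn big] by auto
      moreover have "1 - \<beta> > 0" using b1' by simp
      ultimately show ?thesis by (smt (verit) mult_pos_pos)
    qed
    then have "gweight qh C a0 > 0" unfolding gweight_def by (intro prod_pos) auto
    also have "gweight qh C a0 \<le> Mh" unfolding Mh_def using a0 by simp
    finally show ?thesis .
  qed
  obtain a where aB: "a \<in> Cgraphs B" and aM: "gweight q B a = MB"
    using pos_Max(3)[OF irr BU] unfolding MB_def by blast
  have splith: "gweight qh C g = gweight qh B g * gweight qh (C - B) g"
    unfolding B_def by (rule gweight_split[OF gC sC])
  have gpos: "gweight qh C g > 0" using gw Mhp b0 by (smt (verit) mult_pos_pos)
  have gCBp: "gweight qh (C - B) g > 0"
  proof (rule ccontr)
    assume "\<not> gweight qh (C - B) g > 0"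
    then have "gweight qh (C - B) g = 0" using gweight_nonneg[OF tmh] by (metis less_eq_real_def)
    then show False using gpos splith by simp
  qed
  have "ext g C s a \<in> Cgraphs C" using ext_C[OF gC sC] aB unfolding B_def by blast
  then have "gweight qh C (ext g C s a) \<le> Mh" unfolding Mh_def by simp
  moreover have "gweight qh C (ext g C s a) = gweight qh B a * gweight qh (C - B) g"
    using gweight_ext[OF gC sC, of qh a] unfolding B_def by simp
  ultimately have "\<beta> * (gweight qh B a * gweight qh (C - B) g) \<le> \<beta> * Mh" using b0 by simp
  also have "\<dots> \<le> gweight qh B g * gweight qh (C - B) g" using gw splith by simp
  finally have "(\<beta> * gweight qh B a) * gweight qh (C - B) g \<le> gweight qh B g * gweight qh (C - B) g"
    by (simp add: mult.assoc)
  then have c1: "\<beta> * gweight qh B a \<le> gweight qh B g" using gCBp by (rule mult_right_le_imp_le)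
  have c2: "(1 - \<beta>) ^ N * MB \<le> gweight qh B a"
  proof -
    have "(1 - \<beta>) ^ N * MB \<le> (1 - \<beta>) ^ card B * MB"
    proof (rule mult_right_mono)
      show "(1 - \<beta>) ^ N \<le> (1 - \<beta>) ^ card B"
        by (rule power_decreasing) (use b0 b1' in \<open>auto simp: N_def card_mono\<close>)
    qed (use MBp in simp)
    also have "\<dots> = (\<Prod>x\<in>B. (1 - \<beta>) * q x (a x))"
      using aM unfolding gweight_def by (simp add: prod.distrib)
    also have "\<dots> \<le> gweight qh B a" unfolding gweight_def
    proof (rule prod_mono)
      fix x assume x: "x \<in> B"
      have big: "\<mu> x * q x (a x) \<ge> \<epsilon> * zeta q \<mu>" using max_big[OF BU aB _ x] aM unfolding MB_def by blast
      show "0 \<le> (1 - \<beta>) * q x (a x) \<and> (1 - \<beta>) * q x (a x) \<le> qh x (a x)"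
        using big_lower[OF cl ezp mun qn big] b1' qn by simp
    qed
    finally show ?thesis .
  qed
  have gBh: "gweight qh B g = qh s (g s) * pht"
    unfolding B_def pht_def t_def by (rule gweight_B[OF gC sC])
  have c3: "pht \<le> (1 + \<beta>) ^ N * pt"
  proof -
    have "pht \<le> (\<Prod>x\<in>B - {s}. (1 + \<beta>) * q x (t x))" unfolding pht_def gweight_def
    proof (rule prod_mono)
      fix x assume x: "x \<in> B - {s}"
      then have tx: "t x = g x" unfolding t_def tpart_def[OF gC sC] B_def by simp
      have "\<mu> x * qh x (g x) \<ge> \<epsilon> * zeta q \<mu>" using IH x unfolding B_def by blast
      then have "qh x (g x) \<le> (1 + \<beta>) * q x (g x)" by (rule big_upper[OF cl])
      then show "0 \<le> qh x (t x) \<and> qh x (t x) \<le> (1 + \<beta>) * q x (t x)" using tx qhn by simp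
    qed
    also have "\<dots> = (1 + \<beta>) ^ card (B - {s}) * pt" unfolding pt_def gweight_def
      by (simp add: prod.distrib)
    also have "\<dots> \<le> (1 + \<beta>) ^ N * pt"
    proof (rule mult_right_mono)
      show "(1 + \<beta>) ^ card (B - {s}) \<le> (1 + \<beta>) ^ N"
        by (rule power_increasing) (use b0 in \<open>auto simp: N_def card_mono\<close>)
      show "0 \<le> pt" unfolding pt_def using gweight_nonneg[OF tm] by simp
    qed
    finally show ?thesis .
  qed
  have ptn: "pt \<ge> 0" unfolding pt_def using gweight_nonneg[OF tm] by simp
  have phtn: "pht \<ge> 0" unfolding pht_def using gweight_nonneg[OF tmh] by simp
  have tC: "t \<in> Cgraphs (B - {s})" unfolding B_def t_def by (rule tpart_C[OF gC sC])
  have tin: "\<And>x. x \<in> B - {s} \<Longrightarrow> t x \<in> B" unfolding B_def t_def by (rule tpart_in[OF gC sC])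
  have tl: "pt * Y \<le> \<mu> s * Z"
    unfolding pt_def Y_def Z_def tree_thm[OF tm irr st]
    by (rule tree_lower[OF tm sB tC tin])
  have zZ: "zeta q \<mu> * Z \<le> K * MB * Y"
    unfolding Z_def K_def MB_def Y_def N_def by (rule zZ_bound[OF tm irr st N Bne BU])
  have small: "\<mu> s * qh s (g s) \<le> \<epsilon> * zeta q \<mu>" using neg by simp
  have "\<beta> * ((1 - \<beta>) ^ N * MB) \<le> qh s (g s) * pht"
    using c1 c2 gBh b0 by (smt (verit) mult_left_mono)
  also have "\<dots> \<le> qh s (g s) * ((1 + \<beta>) ^ N * pt)"
    using c3 qhn by (simp add: mult_left_mono)
  finally have d1: "\<beta> * ((1 - \<beta>) ^ N * MB) \<le> qh s (g s) * ((1 + \<beta>) ^ N * pt)" .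
  have "\<mu> s * (\<beta> * ((1 - \<beta>) ^ N * MB)) \<le> \<mu> s * (qh s (g s) * ((1 + \<beta>) ^ N * pt))"
    using d1 mus by simp
  also have "\<dots> = (\<mu> s * qh s (g s)) * ((1 + \<beta>) ^ N * pt)" by simp
  also have "\<dots> \<le> (\<epsilon> * zeta q \<mu>) * ((1 + \<beta>) ^ N * pt)"
    using small ptn b0 by (intro mult_right_mono) auto
  finally have d2: "\<mu> s * (\<beta> * ((1 - \<beta>) ^ N * MB)) \<le> (\<epsilon> * zeta q \<mu>) * ((1 + \<beta>) ^ N * pt)" .
  have YZn: "Y * Z \<ge> 0" using Yp Zp by simp
  have "(\<beta> * (1 - \<beta>) ^ N) * (\<mu> s * MB * Y * Z) = (\<mu> s * (\<beta> * ((1 - \<beta>) ^ N * MB))) * (Y * Z)"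
    by (simp add: algebra_simps)
  also have "\<dots> \<le> ((\<epsilon> * zeta q \<mu>) * ((1 + \<beta>) ^ N * pt)) * (Y * Z)"
    using d2 YZn by (rule mult_right_mono)
  also have "\<dots> = (\<epsilon> * (1 + \<beta>) ^ N) * (zeta q \<mu> * Z) * (pt * Y)"
    by (simp add: algebra_simps)
  also have "\<dots> \<le> (\<epsilon> * (1 + \<beta>) ^ N) * (K * MB * Y) * (\<mu> s * Z)"
  proof -
    have e1: "\<epsilon> * (1 + \<beta>) ^ N \<ge> 0" using e0 b0 by simp
    have z0: "zeta q \<mu> * Z \<ge> 0" using zp Zp by simp
    have A: "(\<epsilon> * (1 + \<beta>) ^ N) * (zeta q \<mu> * Z) \<le> (\<epsilon> * (1 + \<beta>) ^ N) * (K * MB * Y)"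
      using zZ e1 by (rule mult_left_mono)
    have B0: "(\<epsilon> * (1 + \<beta>) ^ N) * (K * MB * Y) \<ge> 0" using e1 Kp MBp Yp by simp
    have c0: "pt * Y \<ge> 0" using ptn Yp by simp
    show ?thesis by (rule mult_mono[OF A tl B0 c0])
  qed
  also have "\<dots> = (\<epsilon> * K * (1 + \<beta>) ^ N) * (\<mu> s * MB * Y * Z)"
    by (simp add: algebra_simps)
  finally have d3: "(\<beta> * (1 - \<beta>) ^ N) * (\<mu> s * MB * Y * Z) \<le> (\<epsilon> * K * (1 + \<beta>) ^ N) * (\<mu> s * MB * Y * Z)" .
  have pos: "\<mu> s * MB * Y * Z > 0" using mus MBp Yp Zp by simp
  have d4: "\<beta> * (1 - \<beta>) ^ N \<le> \<epsilon> * K * (1 + \<beta>) ^ N"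
    using d3 pos by (rule mult_right_le_imp_le)
  have n1: "(1 - \<beta>) ^ N \<ge> 1/2" and n2: "(1 + \<beta>) ^ N \<le> 2"
    using numerics[OF N b0 b1] unfolding N_def by auto
  have eKp: "\<epsilon> * K > 0" using e0 Kp by simp
  have "\<beta> * (1/2) \<le> \<beta> * (1 - \<beta>) ^ N" using n1 b0 by simp
  also have "\<dots> \<le> \<epsilon> * K * (1 + \<beta>) ^ N" by (rule d4)
  also have "\<dots> \<le> \<epsilon> * K * 2" using n2 eKp by (intro mult_left_mono) auto
  finally have f1: "\<beta> \<le> 4 * (\<epsilon> * K)" by simp
  have N4: "real N ^ 4 \<ge> 16"
  proof -
    have "real N \<ge> 2" using N unfolding N_def by simp
    then have "real N ^ 4 \<ge> 2 ^ 4" by (rule power_mono) simp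
    then show ?thesis by simp
  qed
  have "\<epsilon> * K * real N ^ 4 < \<beta> * (1 - \<beta>)" unfolding K_def N_def by (rule eK)
  moreover have "\<beta> * (1 - \<beta>) \<le> \<beta>" using b0 b1' by (simp add: mult_left_le)
  moreover have "\<epsilon> * K * 16 \<le> \<epsilon> * K * real N ^ 4" using N4 eKp by (intro mult_left_mono) auto
  ultimately show False using f1 eKp by linarith
qed

lemma part2:
  assumes CU: "C \<noteq> UNIV" and g: "g \<in> Gbeta \<beta> qh C"
  shows "\<forall>s\<in>C. \<mu> s * qh s (g s) \<ge> \<epsilon> * zeta q \<mu>"
proof -
  have gC: "g \<in> Cgraphs C" using g by (simp add: Gbeta_iff)
  have "wf (rel g C)" using gC by (intro finite_acyclic_wf) (simp_all add: Cgraphs_iff)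
  then have wf: "wf ((rel g C)\<^sup>+)" by (rule wf_trancl)
  have "s \<in> C \<longrightarrow> \<mu> s * qh s (g s) \<ge> \<epsilon> * zeta q \<mu>" for s
    using wf
  proof (induction s rule: wf_induct_rule)
    case (less s)
    show ?case
    proof
      assume sC: "s \<in> C"
      show "\<mu> s * qh s (g s) \<ge> \<epsilon> * zeta q \<mu>"
      proof (rule part2_step[OF CU g sC])
        fix x assume x: "x \<in> anc g C s - {s}"
        then have "(x, s) \<in> (rel g C)\<^sup>*" "x \<noteq> s" by (auto simp: anc_def)
        then have "(x, s) \<in> (rel g C)\<^sup>+" by (simp add: rtrancl_eq_or_trancl)
        moreover have "x \<in> C" using x anc_sub[OF gC sC] by blast
        ultimately show "\<mu> x * qh x (g x) \<ge> \<epsilon> * zeta q \<mu>" using less by blast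
      qed
    qed
  qed
  then show ?thesis by blast
qed

end

theorem lemma3:
  fixes q qh :: "'a::finite \<Rightarrow> 'a \<Rightarrow> real" and \<mu> :: "'a \<Rightarrow> real"
    and \<beta> \<epsilon> :: real and C :: "'a set" and s :: 'a
  assumes "card (UNIV::'a set) \<ge> 2"
    and "0 < \<beta>" "\<beta> < 1 / 2 ^ (card (UNIV::'a set))"
    and "0 < \<epsilon>"
    and "\<epsilon> < \<beta> * (1 - \<beta>) / (real (L_const (card (UNIV::'a set))) * real (card (UNIV::'a set)) ^ 4)"
    and "transition_matrix q" "irreducible q" "stationary q \<mu>"
    and "transition_matrix qh" "close \<epsilon> \<beta> q \<mu> qh"
    and "C \<noteq> {}" "C \<noteq> UNIV" "s \<in> C"
  shows "(\<forall>g\<in>Gbeta \<beta> q C. \<mu> s * q s (g s) \<ge> \<epsilon> * zeta q \<mu>)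
       \<and> (\<forall>g\<in>Gbeta \<beta> qh C. \<mu> s * qh s (g s) \<ge> \<epsilon> * zeta q \<mu>)"
proof
  show "\<forall>g\<in>Gbeta \<beta> q C. \<mu> s * q s (g s) \<ge> \<epsilon> * zeta q \<mu>"
    using part1[OF assms(1-10) assms(12) _ assms(13)] by blast
  show "\<forall>g\<in>Gbeta \<beta> qh C. \<mu> s * qh s (g s) \<ge> \<epsilon> * zeta q \<mu>"
    using part2[OF assms(1-10) assms(12)] assms(13) by blast
qed

end
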